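(* Let $f,g\in\mathcal{H}$ and let $\alpha>0$ be real. Then the germ of $x\mapsto f(x)^{\alpha g(x)}=\exp\big(\alpha\, g(x)\ln f(x)\big)$ belongs to $\mathcal{H}$.
   Context: All functions are real-valued functions defined on some interval $(a,\infty)$. Two such functions are identified if they agree for all sufficiently large $x$; these equivalence classes are germs at $+\infty$. Write $\ln^{(k)}$ for the $k$-fold iterated natural logarithm, with $\ln^{(0)}(x)=x$. Let $\mathcal{H}$ be the smallest set of germs at $+\infty$ satisfying: (i) $\ln^{(k)}\in\mathcal{H}$ for every integer $k\ge0$; (ii) if $f\in\mathcal{H}$, then $\exp\circ f\in\mathcal{H}$, and if moreover $f$ is eventually positive, then $f^\alpha\in\mathcal{H}$ for every real $\alpha>0$; (iii) if $f,g\in\mathcal{H}$ and $f\ne g$ (as germs), then $fg\in\mathcal{H}$; (iv) if $f,g\in\mathcal{H}$ and $f(x)/g(x)\to+\infty$, then $f/g\in\mathcal{H}$. (Every element of $\mathcal{H}$ tends to $+\infty$, so $\ln f$ is eventually defined.) *)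

theory Defs
  imports Complex_Main
begin

text \<open>Germs at +infinity are represented by total functions real => real;
  the set H below is closed under eventual equality (rule H_germ), so it is
  the preimage of the smallest set of germs with the stated closure
  properties.\<close>

inductive H :: "(real \<Rightarrow> real) \<Rightarrow> bool" where
  H_ln_iter: "H (\<lambda>x. (ln ^^ k) x)"
| H_exp: "H f \<Longrightarrow> H (\<lambda>x. exp (f x))"
| H_powr: "H f \<Longrightarrow> eventually (\<lambda>x. f x > 0) at_top \<Longrightarrow> (\<alpha>::real) > 0
            \<Longrightarrow> H (\<lambda>x. f x powr \<alpha>)"
| H_mult: "H f \<Longrightarrow> H g \<Longrightarrow> \<not> eventually (\<lambda>x. f x = g x) at_top
            \<Longrightarrow> H (\<lambda>x. f x * g x)"
| H_div: "H f \<Longrightarrow> H g \<Longrightarrow> filterlim (\<lambda>x. f x / g x) at_top at_top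
            \<Longrightarrow> H (\<lambda>x. f x / g x)"
| H_germ: "H f \<Longrightarrow> eventually (\<lambda>x. f x = g x) at_top \<Longrightarrow> H g"

end

theory Submission
  imports Defs
begin

lemma H_tends: "H f \<Longrightarrow> filterlim f at_top at_top"
proof (induction rule: H.induct)
  case (H_ln_iter k)
  show ?case
  proof (induction k)
    case 0 then show ?case by (simp add: filterlim_ident)
  next
    case (Suc k)
    have "filterlim (\<lambda>x::real. ln ((ln ^^ k) x)) at_top at_top"
      by (rule filterlim_compose[OF ln_at_top Suc.IH])
    then show ?case unfolding funpow.simps o_def .
  qed
next
  case (H_exp f) then show ?case using filterlim_compose[OF exp_at_top] by blast
next
  case (H_powr f \<alpha>)
  have l1: "filterlim (\<lambda>x. ln (f x)) at_top at_top"
    using filterlim_compose[OF ln_at_top H_powr.IH] .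
  have l2: "filterlim (\<lambda>x. \<alpha> * ln (f x)) at_top at_top"
    using filterlim_tendsto_pos_mult_at_top[OF tendsto_const H_powr.hyps(3) l1] .
  have l3: "filterlim (\<lambda>x. exp (\<alpha> * ln (f x))) at_top at_top"
    using filterlim_compose[OF exp_at_top l2] .
  have "eventually (\<lambda>x. exp (\<alpha> * ln (f x)) = f x powr \<alpha>) at_top"
    using H_powr.hyps(2) by eventually_elim (simp add: powr_def mult_ac)
  then show ?case using filterlim_cong[OF refl refl, of "\<lambda>x. exp (\<alpha> * ln (f x))" "\<lambda>x. f x powr \<alpha>"] l3 by simp
next
  case (H_mult f g) then show ?case using filterlim_at_top_mult_at_top by blast
next
  case (H_div f g) then show ?case by simp
next
  case (H_germ f g) then show ?case using filterlim_cong by blast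
qed

lemma H_pos: "H f \<Longrightarrow> eventually (\<lambda>x. f x > 0) at_top"
  using H_tends filterlim_at_top_dense by blast

lemma helper:
  assumes u: "H u" and v: "H v" and a: "\<alpha> > 0"
  shows "H (\<lambda>x. exp (\<alpha> * u x * v x))"
proof -
  have uv: "H (\<lambda>x. u x * v x)"
  proof (cases "eventually (\<lambda>x. u x = v x) at_top")
    case True
    have "H (\<lambda>x. u x powr 2)" using H_powr[OF u H_pos[OF u]] by simp
    moreover have "eventually (\<lambda>x. u x powr 2 = u x * v x) at_top"
      using True H_pos[OF u] by eventually_elim (simp add: powr_numeral power2_eq_square)
    ultimately show ?thesis by (rule H_germ)
  next
    case False then show ?thesis using H_mult[OF u v] by blast
  qed
  have "H (\<lambda>x. exp (u x * v x) powr \<alpha>)"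
    using H_powr[OF H_exp[OF uv] _ a] by simp
  moreover have "(\<lambda>x. exp (u x * v x) powr \<alpha>) = (\<lambda>x. exp (\<alpha> * u x * v x))"
    by (simp add: powr_def mult_ac)
  ultimately show ?thesis by simp
qed

lemma main:
  "H f \<Longrightarrow> \<forall>g \<alpha>. H g \<longrightarrow> \<alpha> > 0 \<longrightarrow> H (\<lambda>x. exp (\<alpha> * g x * ln (f x)))"
proof (induction rule: H.induct)
  case (H_ln_iter k)
  show ?case
  proof (intro allI impI)
    fix g and \<alpha> :: real assume "H g" "\<alpha> > 0"
    then have "H (\<lambda>x. exp (\<alpha> * g x * (ln ^^ Suc k) x))"
      using helper H.H_ln_iter by blast
    then show "H (\<lambda>x. exp (\<alpha> * g x * ln ((ln ^^ k) x)))" by simp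
  qed
next
  case (H_exp f)
  then show ?case using helper by simp
next
  case (H_powr f \<beta>)
  show ?case
  proof (intro allI impI)
    fix g and \<alpha> :: real assume g: "H g" and a: "\<alpha> > 0"
    have "H (\<lambda>x. exp ((\<alpha> * \<beta>) * g x * ln (f x)))"
      using H_powr.IH g a H_powr.hyps(3) by simp
    moreover have "eventually (\<lambda>x. exp ((\<alpha> * \<beta>) * g x * ln (f x)) =
        exp (\<alpha> * g x * ln (f x powr \<beta>))) at_top"
      using H_powr.hyps(2) by eventually_elim (simp add: ln_powr mult_ac)
    ultimately show "H (\<lambda>x. exp (\<alpha> * g x * ln (f x powr \<beta>)))" by (rule H.H_germ)
  qed
next
  case (H_mult f1 f2)
  show ?case
  proof (intro allI impI)
    fix g and \<alpha> :: real assume g: "H g" and a: "\<alpha> > 0"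
    have A: "H (\<lambda>x. exp (\<alpha> * g x * ln (f1 x)))" using H_mult.IH g a by blast
    have B: "H (\<lambda>x. exp (\<alpha> * g x * ln (f2 x)))" using H_mult.IH g a by blast
    have p1: "eventually (\<lambda>x. f1 x > 0) at_top" using H_pos H_mult.hyps by blast
    have p2: "eventually (\<lambda>x. f2 x > 0) at_top" using H_pos H_mult.hyps by blast
    have pg: "eventually (\<lambda>x. g x > 0) at_top" using H_pos g by blast
    have ne: "\<not> eventually (\<lambda>x. exp (\<alpha> * g x * ln (f1 x)) = exp (\<alpha> * g x * ln (f2 x))) at_top"
    proof
      assume "eventually (\<lambda>x. exp (\<alpha> * g x * ln (f1 x)) = exp (\<alpha> * g x * ln (f2 x))) at_top"
      then have "eventually (\<lambda>x. f1 x = f2 x) at_top"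
        using eventually_conj[OF p1 eventually_conj[OF p2 pg]]
      proof (rule eventually_elim2)
        fix x assume "exp (\<alpha> * g x * ln (f1 x)) = exp (\<alpha> * g x * ln (f2 x))"
          "0 < f1 x \<and> 0 < f2 x \<and> 0 < g x"
        then show "f1 x = f2 x" using a by auto
      qed
      then show False using H_mult.hyps(3) by blast
    qed
    have "H (\<lambda>x. exp (\<alpha> * g x * ln (f1 x)) * exp (\<alpha> * g x * ln (f2 x)))"
      using H.H_mult[OF A B ne] .
    moreover have "eventually (\<lambda>x. exp (\<alpha> * g x * ln (f1 x)) * exp (\<alpha> * g x * ln (f2 x)) =
        exp (\<alpha> * g x * ln (f1 x * f2 x))) at_top"
      using p1 p2 by eventually_elim (simp add: ln_mult distrib_left exp_add)
    ultimately show "H (\<lambda>x. exp (\<alpha> * g x * ln (f1 x * f2 x)))" by (rule H.H_germ)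
  qed
next
  case (H_div f1 f2)
  show ?case
  proof (intro allI impI)
    fix g and \<alpha> :: real assume g: "H g" and a: "\<alpha> > 0"
    have A: "H (\<lambda>x. exp (\<alpha> * g x * ln (f1 x)))" using H_div.IH g a by blast
    have B: "H (\<lambda>x. exp (\<alpha> * g x * ln (f2 x)))" using H_div.IH g a by blast
    have p1: "eventually (\<lambda>x. f1 x > 0) at_top" using H_pos H_div.hyps by blast
    have p2: "eventually (\<lambda>x. f2 x > 0) at_top" using H_pos H_div.hyps by blast
    have eq: "eventually (\<lambda>x. exp (\<alpha> * g x * ln (f1 x)) / exp (\<alpha> * g x * ln (f2 x)) =
        exp (\<alpha> * g x * ln (f1 x / f2 x))) at_top"
      using p1 p2 by eventually_elim (simp add: ln_div right_diff_distrib exp_diff)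
    have l1: "filterlim (\<lambda>x. ln (f1 x / f2 x)) at_top at_top"
      using filterlim_compose[OF ln_at_top H_div.hyps(3)] .
    have l2: "filterlim (\<lambda>x. g x * ln (f1 x / f2 x)) at_top at_top"
      using filterlim_at_top_mult_at_top[OF H_tends[OF g] l1] .
    have l3: "filterlim (\<lambda>x. \<alpha> * (g x * ln (f1 x / f2 x))) at_top at_top"
      using filterlim_tendsto_pos_mult_at_top[OF tendsto_const a l2] .
    have l4: "filterlim (\<lambda>x. exp (\<alpha> * g x * ln (f1 x / f2 x))) at_top at_top"
      using filterlim_compose[OF exp_at_top l3] by (simp add: mult_ac)
    have "filterlim (\<lambda>x. exp (\<alpha> * g x * ln (f1 x)) / exp (\<alpha> * g x * ln (f2 x))) at_top at_top"
      using filterlim_cong[OF refl refl eq] l4 by simp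
    then have "H (\<lambda>x. exp (\<alpha> * g x * ln (f1 x)) / exp (\<alpha> * g x * ln (f2 x)))"
      by (rule H.H_div[OF A B])
    then show "H (\<lambda>x. exp (\<alpha> * g x * ln (f1 x / f2 x)))" using eq by (rule H.H_germ)
  qed
next
  case (H_germ f1 f2)
  show ?case
  proof (intro allI impI)
    fix g and \<alpha> :: real assume g: "H g" and a: "\<alpha> > 0"
    have "H (\<lambda>x. exp (\<alpha> * g x * ln (f1 x)))" using H_germ.IH g a by blast
    moreover have "eventually (\<lambda>x. exp (\<alpha> * g x * ln (f1 x)) = exp (\<alpha> * g x * ln (f2 x))) at_top"
      using H_germ.hyps(2) by eventually_elim simp
    ultimately show "H (\<lambda>x. exp (\<alpha> * g x * ln (f2 x)))" by (rule H.H_germ)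
  qed
qed

theorem mainTheorem5:
  fixes f g :: "real \<Rightarrow> real" and \<alpha> :: real
  assumes "H f" and "H g" and "\<alpha> > 0"
  shows "H (\<lambda>x. exp (\<alpha> * g x * ln (f x)))"
  using main assms by blast

end
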